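(* Let $\dot x$ be a hereditarily symmetric name supported by a countable $\rho$-closed set $A\subseteq\omega_1$, let $m<\omega$, and suppose $p\in\mathbb P_1$ decides whether $\check m\in\dot x$. Then the restriction of $p$ to the coordinates $(\xi,i,n)$ with $\xi\in A$ decides the same truth value.
   Context: $\rho:\omega_1\setminus\{0\}\to\omega_1$ is the generic regressive map added by finite partial regressive functions; $\operatorname{Succ}_\rho(\xi)=\{\eta:\rho(\eta)=\xi\}$; a set is $\rho$-closed if closed under $\rho$, and $\operatorname{cl}_\rho(A)$ is the least $\rho$-closed superset. $\mathbb P_1=\operatorname{Fn}(\omega_1\times\omega\times\omega,2,{<}\omega)$, finite partial functions ordered by extension. For $\xi<\omega_1,i<\omega$, $s\subseteq\omega$ finite or cofinite, $\tau^{\mathrm{1cas}}_{\xi,i,s}$ flips the value of a condition at each coordinate $(\zeta,i,n)$ with $n\in s$ and $\zeta\in\{\xi\}\cup\operatorname{Succ}_\rho(\xi)$; $\mathscr G^{\mathrm{1cas}}_\rho$ is the group they generate; $\operatorname{Fix}^{\mathrm{1cas}}_\rho(A)$ is the subgroup acting trivially on coordinates $(\zeta,j,n)$ with $\zeta\in\operatorname{cl}_\rho(A)$; $\mathscr F^{\mathrm{1cas}}_\rho$ is the filter of subgroups generated by these for countable $A$; hereditarily symmetric names are with respect to $(\mathbb P_1,\mathscr G^{\mathrm{1cas}}_\rho,\mathscr F^{\mathrm{1cas}}_\rho)$; a name is supported by $A$ if it is fixed by every element of $\operatorname{Fix}^{\mathrm{1cas}}_\rho(A)$. *)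

theory Defs
  imports Main "HOL-Library.Countable_Set"
begin

definition is_omega1 :: "'w::wellorder itself \<Rightarrow> bool" where
  "is_omega1 _ \<longleftrightarrow> \<not> countable (UNIV :: 'w set) \<and> (\<forall>\<xi>::'w. countable {\<eta>. \<eta> < \<xi>})"

definition om0 :: "'w::wellorder" where
  "om0 = (LEAST x. True)"

definition regressive :: "('w::wellorder \<Rightarrow> 'w) \<Rightarrow> bool" where
  "regressive \<rho> \<longleftrightarrow> (\<forall>\<eta>. \<eta> \<noteq> om0 \<longrightarrow> \<rho> \<eta> < \<eta>)"

definition Succ :: "('w::wellorder \<Rightarrow> 'w) \<Rightarrow> 'w \<Rightarrow> 'w set" where
  "Succ \<rho> \<xi> = {\<eta>. \<eta> \<noteq> om0 \<and> \<rho> \<eta> = \<xi>}"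

definition rho_closed :: "('w::wellorder \<Rightarrow> 'w) \<Rightarrow> 'w set \<Rightarrow> bool" where
  "rho_closed \<rho> A \<longleftrightarrow> (\<forall>\<eta>\<in>A. \<eta> \<noteq> om0 \<longrightarrow> \<rho> \<eta> \<in> A)"

definition cl :: "('w::wellorder \<Rightarrow> 'w) \<Rightarrow> 'w set \<Rightarrow> 'w set" where
  "cl \<rho> A = \<Inter>{B. A \<subseteq> B \<and> rho_closed \<rho> B}"

type_synonym 'w cond = "'w \<times> nat \<times> nat \<Rightarrow> bool option"

definition P1 :: "'w cond set" where
  "P1 = {p. finite (dom p)}"

definition le :: "'w cond \<Rightarrow> 'w cond \<Rightarrow> bool" where
  "le q p \<longleftrightarrow> p \<subseteq>\<^sub>m q"

definition tau :: "('w::wellorder \<Rightarrow> 'w) \<Rightarrow> 'w \<Rightarrow> nat \<Rightarrow> nat set \<Rightarrow> 'w cond \<Rightarrow> 'w cond" where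
  "tau \<rho> \<xi> i s p = (\<lambda>c. if c \<in> (({\<xi>} \<union> Succ \<rho> \<xi>) \<times> {i} \<times> s) then map_option Not (p c) else p c)"

text \<open>The group generated by the tau's (each is an involution, so finite
 compositions of generators form the generated group).\<close>
inductive_set G1cas :: "('w::wellorder \<Rightarrow> 'w) \<Rightarrow> ('w cond \<Rightarrow> 'w cond) set" for \<rho> where
  G_id: "id \<in> G1cas \<rho>"
| G_step: "\<pi> \<in> G1cas \<rho> \<Longrightarrow> finite s \<or> finite (- s) \<Longrightarrow> tau \<rho> \<xi> i s \<circ> \<pi> \<in> G1cas \<rho>"

definition Fix :: "('w::wellorder \<Rightarrow> 'w) \<Rightarrow> 'w set \<Rightarrow> ('w cond \<Rightarrow> 'w cond) set" where
  "Fix \<rho> A = {\<pi> \<in> G1cas \<rho>. \<forall>p c. fst c \<in> cl \<rho> A \<longrightarrow> \<pi> p c = p c}"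

text \<open>Names: check names of natural numbers, and general names whose set of
 pairs (name, condition) is indexed by the (arbitrary) type 'i.\<close>
datatype ('w, 'i) name =
    Check nat
  | Name "'i \<Rightarrow> (('w, 'i) name \<times> 'w cond) option"

fun members :: "('w, 'i) name \<Rightarrow> (('w, 'i) name \<times> 'w cond) set" where
  "members (Check n) = {(Check k, Map.empty) | k. k < n}"
| "members (Name f) = {x. \<exists>j. f j = Some x}"

inductive name_eq :: "('w, 'i) name \<Rightarrow> ('w, 'i) name \<Rightarrow> bool" where
  "(\<forall>\<sigma> p. (\<sigma>, p) \<in> members x \<longrightarrow> (\<exists>\<sigma>'. (\<sigma>', p) \<in> members y \<and> name_eq \<sigma> \<sigma>')) \<Longrightarrow>
   (\<forall>\<sigma> p. (\<sigma>, p) \<in> members y \<longrightarrow> (\<exists>\<sigma>'. (\<sigma>', p) \<in> members x \<and> name_eq \<sigma>' \<sigma>)) \<Longrightarrow>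
   name_eq x y"

primrec name_map :: "('w cond \<Rightarrow> 'w cond) \<Rightarrow> ('w, 'i) name \<Rightarrow> ('w, 'i) name" where
  "name_map \<pi> (Check n) = Check n"
| "name_map \<pi> (Name f) = Name (\<lambda>j. map_option (map_prod (name_map \<pi>) \<pi>) (f j))"

definition supported_by :: "('w::wellorder \<Rightarrow> 'w) \<Rightarrow> 'w set \<Rightarrow> ('w, 'i) name \<Rightarrow> bool" where
  "supported_by \<rho> A x \<longleftrightarrow> (\<forall>\<pi> \<in> Fix \<rho> A. name_eq (name_map \<pi> x) x)"

text \<open>Symmetric: the stabilizer lies in the filter generated by the Fix(A),
 A countable.\<close>
definition symmetric :: "('w::wellorder \<Rightarrow> 'w) \<Rightarrow> ('w, 'i) name \<Rightarrow> bool" where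
  "symmetric \<rho> x \<longleftrightarrow> (\<exists>A. countable A \<and> supported_by \<rho> A x)"

inductive HS :: "('w::wellorder \<Rightarrow> 'w) \<Rightarrow> ('w, 'i) name \<Rightarrow> bool" for \<rho> where
  "symmetric \<rho> x \<Longrightarrow> (\<forall>\<sigma> p. (\<sigma>, p) \<in> members x \<longrightarrow> p \<in> P1 \<and> HS \<rho> \<sigma>) \<Longrightarrow> HS \<rho> x"

inductive forces_eq :: "'w cond \<Rightarrow> ('w, 'i) name \<Rightarrow> ('w, 'i) name \<Rightarrow> bool" where
  "p \<in> P1 \<Longrightarrow>
   (\<forall>\<sigma>1 s1. (\<sigma>1, s1) \<in> members \<tau>1 \<longrightarrow>
      (\<forall>r \<in> P1. le r p \<longrightarrow> (\<exists>q \<in> P1. le q r \<and>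
         (le q s1 \<longrightarrow> (\<exists>\<sigma>2 s2. (\<sigma>2, s2) \<in> members \<tau>2 \<and> le q s2 \<and> forces_eq q \<sigma>1 \<sigma>2))))) \<Longrightarrow>
   (\<forall>\<sigma>2 s2. (\<sigma>2, s2) \<in> members \<tau>2 \<longrightarrow>
      (\<forall>r \<in> P1. le r p \<longrightarrow> (\<exists>q \<in> P1. le q r \<and>
         (le q s2 \<longrightarrow> (\<exists>\<sigma>1 s1. (\<sigma>1, s1) \<in> members \<tau>1 \<and> le q s1 \<and> forces_eq q \<sigma>1 \<sigma>2))))) \<Longrightarrow>
   forces_eq p \<tau>1 \<tau>2"

definition forces_mem :: "'w cond \<Rightarrow> ('w, 'i) name \<Rightarrow> ('w, 'i) name \<Rightarrow> bool" where
  "forces_mem p \<tau>1 \<tau>2 \<longleftrightarrow> p \<in> P1 \<and>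
     (\<forall>r \<in> P1. le r p \<longrightarrow> (\<exists>q \<in> P1. le q r \<and>
        (\<exists>\<sigma> s. (\<sigma>, s) \<in> members \<tau>2 \<and> le q s \<and> forces_eq q \<tau>1 \<sigma>)))"

definition forces_not_mem :: "'w cond \<Rightarrow> ('w, 'i) name \<Rightarrow> ('w, 'i) name \<Rightarrow> bool" where
  "forces_not_mem p \<tau>1 \<tau>2 \<longleftrightarrow> p \<in> P1 \<and> \<not> (\<exists>q \<in> P1. le q p \<and> forces_mem q \<tau>1 \<tau>2)"

definition decides_mem :: "'w cond \<Rightarrow> ('w, 'i) name \<Rightarrow> ('w, 'i) name \<Rightarrow> bool" where
  "decides_mem p \<tau>1 \<tau>2 \<longleftrightarrow> forces_mem p \<tau>1 \<tau>2 \<or> forces_not_mem p \<tau>1 \<tau>2"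

end

theory Submission
  imports Defs
begin

definition flip :: "('w \<times> nat \<times> nat) set \<Rightarrow> 'w cond \<Rightarrow> 'w cond" where
  "flip F p = (\<lambda>c. if c \<in> F then map_option Not (p c) else p c)"

lemma flip_flip[simp]: "flip F (flip F p) = p"
  by (rule ext) (simp add: flip_def option.map_comp comp_def option.map_ident)

lemma dom_flip[simp]: "dom (flip F p) = dom p"
  by (auto simp: flip_def dom_def)

lemma flip_empty[simp]: "flip F Map.empty = Map.empty"
  by (rule ext) (simp add: flip_def)

lemma P1_flip[simp]: "flip F p \<in> P1 \<longleftrightarrow> p \<in> P1"
  by (simp add: P1_def)

lemma le_flip1: "le q r \<Longrightarrow> le (flip F q) (flip F r)"
  unfolding le_def map_le_def flip_def dom_def by auto

lemma le_flip[simp]: "le (flip F q) (flip F r) \<longleftrightarrow> le q r"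
  using le_flip1[of q r F] le_flip1[of "flip F q" "flip F r" F] by auto

lemma flip_comp: "flip T \<circ> flip F = flip ((T - F) \<union> (F - T))"
  by (rule ext, rule ext) (auto simp: flip_def option.map_comp comp_def option.map_ident)

lemma tau_flip: "tau \<rho> \<xi> i s = flip (({\<xi>} \<union> Succ \<rho> \<xi>) \<times> {i} \<times> s)"
  by (rule ext) (simp add: tau_def flip_def)

lemma members_map:
  "members (name_map (flip F) a) = map_prod (name_map (flip F)) (flip F) ` members a"
proof (cases a)
  case (Check n)
  have "members a = map_prod (name_map (flip F)) (flip F) ` members a" using Check
    by (auto simp: image_def intro!: exI[of _ "Map.empty"])
  then show ?thesis using Check by simp
qed (auto simp: image_def)

lemma forces_eq_flip:
  assumes "forces_eq p a b"
  shows "forces_eq (flip F p) (name_map (flip F) a) (name_map (flip F) b)"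
  using assms
proof (induction rule: forces_eq.induct)
  case (1 p \<tau>1 \<tau>2)
  let ?f = "flip F"
  let ?n = "name_map (flip F)"
  show ?case
  proof (rule forces_eq.intros)
    show "?f p \<in> P1" using 1 by simp
    show "\<forall>\<sigma>1 s1. (\<sigma>1, s1) \<in> members (?n \<tau>1) \<longrightarrow>
      (\<forall>r \<in> P1. le r (?f p) \<longrightarrow> (\<exists>q \<in> P1. le q r \<and>
         (le q s1 \<longrightarrow> (\<exists>\<sigma>2 s2. (\<sigma>2, s2) \<in> members (?n \<tau>2) \<and> le q s2 \<and> forces_eq q \<sigma>1 \<sigma>2))))"
    proof (intro allI impI ballI)
      fix \<sigma>1' s1' r
      assume m: "(\<sigma>1', s1') \<in> members (?n \<tau>1)" and r: "r \<in> P1" "le r (?f p)"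
      from m obtain \<sigma>1 s1 where m1: "(\<sigma>1, s1) \<in> members \<tau>1" and e: "\<sigma>1' = ?n \<sigma>1" "s1' = ?f s1"
        by (auto simp: members_map)
      have "?f r \<in> P1" "le (?f r) p" using r le_flip[of F r "?f p"] by auto
      with 1(2) m1 obtain q where q: "q \<in> P1" "le q (?f r)"
        and h: "le q s1 \<longrightarrow> (\<exists>\<sigma>2 s2. (\<sigma>2, s2) \<in> members \<tau>2 \<and> le q s2 \<and> forces_eq q \<sigma>1 \<sigma>2
              \<and> forces_eq (?f q) (?n \<sigma>1) (?n \<sigma>2))"
        by blast
      show "\<exists>q \<in> P1. le q r \<and>
         (le q s1' \<longrightarrow> (\<exists>\<sigma>2 s2. (\<sigma>2, s2) \<in> members (?n \<tau>2) \<and> le q s2 \<and> forces_eq q \<sigma>1' \<sigma>2))"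
      proof (intro bexI conjI impI)
        show "?f q \<in> P1" using q by simp
        show "le (?f q) r" using q le_flip[of F q "?f r"] by simp
        assume "le (?f q) s1'"
        then have "le q s1" using e le_flip[of F q s1] by simp
        with h obtain \<sigma>2 s2 where "(\<sigma>2, s2) \<in> members \<tau>2" "le q s2"
             "forces_eq (?f q) (?n \<sigma>1) (?n \<sigma>2)" by blast
        then show "\<exists>\<sigma>2 s2. (\<sigma>2, s2) \<in> members (?n \<tau>2) \<and> le (?f q) s2 \<and> forces_eq (?f q) \<sigma>1' \<sigma>2"
          using e by (intro exI[of _ "?n \<sigma>2"] exI[of _ "?f s2"]) (auto simp: members_map)
      qed
    qed
    show "\<forall>\<sigma>2 s2. (\<sigma>2, s2) \<in> members (?n \<tau>2) \<longrightarrow>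
      (\<forall>r \<in> P1. le r (?f p) \<longrightarrow> (\<exists>q \<in> P1. le q r \<and>
         (le q s2 \<longrightarrow> (\<exists>\<sigma>1 s1. (\<sigma>1, s1) \<in> members (?n \<tau>1) \<and> le q s1 \<and> forces_eq q \<sigma>1 \<sigma>2))))"
    proof (intro allI impI ballI)
      fix \<sigma>2' s2' r
      assume m: "(\<sigma>2', s2') \<in> members (?n \<tau>2)" and r: "r \<in> P1" "le r (?f p)"
      from m obtain \<sigma>2 s2 where m2: "(\<sigma>2, s2) \<in> members \<tau>2" and e: "\<sigma>2' = ?n \<sigma>2" "s2' = ?f s2"
        by (auto simp: members_map)
      have "?f r \<in> P1" "le (?f r) p" using r le_flip[of F r "?f p"] by auto
      with 1(3) m2 obtain q where q: "q \<in> P1" "le q (?f r)"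
        and h: "le q s2 \<longrightarrow> (\<exists>\<sigma>1 s1. (\<sigma>1, s1) \<in> members \<tau>1 \<and> le q s1 \<and> forces_eq q \<sigma>1 \<sigma>2
              \<and> forces_eq (?f q) (?n \<sigma>1) (?n \<sigma>2))"
        by blast
      show "\<exists>q \<in> P1. le q r \<and>
         (le q s2' \<longrightarrow> (\<exists>\<sigma>1 s1. (\<sigma>1, s1) \<in> members (?n \<tau>1) \<and> le q s1 \<and> forces_eq q \<sigma>1 \<sigma>2'))"
      proof (intro bexI conjI impI)
        show "?f q \<in> P1" using q by simp
        show "le (?f q) r" using q le_flip[of F q "?f r"] by simp
        assume "le (?f q) s2'"
        then have "le q s2" using e le_flip[of F q s2] by simp
        with h obtain \<sigma>1 s1 where "(\<sigma>1, s1) \<in> members \<tau>1" "le q s1"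
             "forces_eq (?f q) (?n \<sigma>1) (?n \<sigma>2)" by blast
        then show "\<exists>\<sigma>1 s1. (\<sigma>1, s1) \<in> members (?n \<tau>1) \<and> le (?f q) s1 \<and> forces_eq (?f q) \<sigma>1 \<sigma>2'"
          using e by (intro exI[of _ "?n \<sigma>1"] exI[of _ "?f s1"]) (auto simp: members_map)
      qed
    qed
  qed
qed

lemma forces_eq_name_eq:
  assumes "forces_eq p t a"
  shows "name_eq a b \<Longrightarrow> forces_eq p t b"
  using assms
proof (induction arbitrary: b rule: forces_eq.induct)
  case (1 p \<tau>1 \<tau>2)
  from 1(4) have ne1: "\<And>\<sigma> s. (\<sigma>, s) \<in> members \<tau>2 \<Longrightarrow> \<exists>\<sigma>'. (\<sigma>', s) \<in> members b \<and> name_eq \<sigma> \<sigma>'"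
    and ne2: "\<And>\<sigma> s. (\<sigma>, s) \<in> members b \<Longrightarrow> \<exists>\<sigma>'. (\<sigma>', s) \<in> members \<tau>2 \<and> name_eq \<sigma>' \<sigma>"
    by (auto elim: name_eq.cases)
  show ?case
  proof (rule forces_eq.intros)
    show "p \<in> P1" by fact
    show "\<forall>\<sigma>1 s1. (\<sigma>1, s1) \<in> members \<tau>1 \<longrightarrow>
      (\<forall>r \<in> P1. le r p \<longrightarrow> (\<exists>q \<in> P1. le q r \<and>
         (le q s1 \<longrightarrow> (\<exists>\<sigma>2 s2. (\<sigma>2, s2) \<in> members b \<and> le q s2 \<and> forces_eq q \<sigma>1 \<sigma>2))))"
    proof (intro allI impI ballI)
      fix \<sigma>1 s1 r assume m: "(\<sigma>1, s1) \<in> members \<tau>1" and r: "r \<in> P1" "le r p"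
      with 1(2) obtain q where q: "q \<in> P1" "le q r" and
        h: "le q s1 \<longrightarrow> (\<exists>\<sigma>2 s2. (\<sigma>2, s2) \<in> members \<tau>2 \<and> le q s2 \<and> forces_eq q \<sigma>1 \<sigma>2
             \<and> (\<forall>b. name_eq \<sigma>2 b \<longrightarrow> forces_eq q \<sigma>1 b))" by blast
      show "\<exists>q \<in> P1. le q r \<and>
         (le q s1 \<longrightarrow> (\<exists>\<sigma>2 s2. (\<sigma>2, s2) \<in> members b \<and> le q s2 \<and> forces_eq q \<sigma>1 \<sigma>2))"
      proof (intro bexI conjI impI)
        assume "le q s1"
        with h obtain \<sigma>2 s2 where a: "(\<sigma>2, s2) \<in> members \<tau>2" "le q s2"
          "\<forall>b. name_eq \<sigma>2 b \<longrightarrow> forces_eq q \<sigma>1 b" by blast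
        from ne1[OF a(1)] a show "\<exists>\<sigma>2 s2. (\<sigma>2, s2) \<in> members b \<and> le q s2 \<and> forces_eq q \<sigma>1 \<sigma>2"
          by blast
      qed (use q in auto)
    qed
    show "\<forall>\<sigma>2 s2. (\<sigma>2, s2) \<in> members b \<longrightarrow>
      (\<forall>r \<in> P1. le r p \<longrightarrow> (\<exists>q \<in> P1. le q r \<and>
         (le q s2 \<longrightarrow> (\<exists>\<sigma>1 s1. (\<sigma>1, s1) \<in> members \<tau>1 \<and> le q s1 \<and> forces_eq q \<sigma>1 \<sigma>2))))"
    proof (intro allI impI ballI)
      fix \<sigma>2' s2 r assume m: "(\<sigma>2', s2) \<in> members b" and r: "r \<in> P1" "le r p"
      from ne2[OF m] obtain \<sigma>2 where m2: "(\<sigma>2, s2) \<in> members \<tau>2" "name_eq \<sigma>2 \<sigma>2'" by blast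
      with 1(3) r obtain q where q: "q \<in> P1" "le q r" and
        h: "le q s2 \<longrightarrow> (\<exists>\<sigma>1 s1. (\<sigma>1, s1) \<in> members \<tau>1 \<and> le q s1 \<and> forces_eq q \<sigma>1 \<sigma>2
             \<and> (\<forall>b. name_eq \<sigma>2 b \<longrightarrow> forces_eq q \<sigma>1 b))" by blast
      show "\<exists>q \<in> P1. le q r \<and>
         (le q s2 \<longrightarrow> (\<exists>\<sigma>1 s1. (\<sigma>1, s1) \<in> members \<tau>1 \<and> le q s1 \<and> forces_eq q \<sigma>1 \<sigma>2'))"
        using q h m2 by blast
    qed
  qed
qed

lemma forces_mem_name_eq:
  assumes "forces_mem p t a" "name_eq a b"
  shows "forces_mem p t b"
proof -
  from assms(2) have ne1: "\<And>\<sigma> s. (\<sigma>, s) \<in> members a \<Longrightarrow> \<exists>\<sigma>'. (\<sigma>', s) \<in> members b \<and> name_eq \<sigma> \<sigma>'"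
    by (auto elim: name_eq.cases)
  show ?thesis using assms(1) unfolding forces_mem_def
    by (meson ne1 forces_eq_name_eq)
qed

lemma forces_mem_flip:
  assumes "forces_mem p t a"
  shows "forces_mem (flip F p) (name_map (flip F) t) (name_map (flip F) a)"
  unfolding forces_mem_def
proof (intro conjI ballI impI)
  show "flip F p \<in> P1" using assms by (simp add: forces_mem_def)
  fix r assume r: "r \<in> P1" "le r (flip F p)"
  then have "flip F r \<in> P1" "le (flip F r) p" using le_flip[of F "flip F r" p] by auto
  with assms obtain q \<sigma> s where q: "q \<in> P1" "le q (flip F r)" "(\<sigma>, s) \<in> members a" "le q s"
     "forces_eq q t \<sigma>" unfolding forces_mem_def by blast
  show "\<exists>q\<in>P1. le q r \<and> (\<exists>\<sigma> s. (\<sigma>, s) \<in> members (name_map (flip F) a) \<and> le q s \<and>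
      forces_eq q (name_map (flip F) t) \<sigma>)"
  proof (intro bexI conjI exI)
    show "flip F q \<in> P1" using q by simp
    show "le (flip F q) r" using q le_flip[of F q "flip F r"] by simp
    show "(name_map (flip F) \<sigma>, flip F s) \<in> members (name_map (flip F) a)"
      using q by (auto simp: members_map)
    show "le (flip F q) (flip F s)" using q by simp
    show "forces_eq (flip F q) (name_map (flip F) t) (name_map (flip F) \<sigma>)"
      using q forces_eq_flip by blast
  qed
qed

lemma le_trans': "le a b \<Longrightarrow> le b c \<Longrightarrow> le a c"
  unfolding le_def using map_le_trans by blast

lemma forces_mem_mono:
  assumes "forces_mem p t a" "q \<in> P1" "le q p"
  shows "forces_mem q t a"
  using assms unfolding forces_mem_def by (meson le_trans')

lemma flip_empty_id: "flip {} = id"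
  by (rule ext) (simp add: flip_def)

lemma exists_flip:
  fixes \<rho> :: "'w::wellorder \<Rightarrow> 'w"
  assumes reg: "regressive \<rho>" and rc: "rho_closed \<rho> A" and fin: "finite E"
  shows "(\<forall>c\<in>E. fst c \<notin> A) \<Longrightarrow> D \<subseteq> E \<Longrightarrow>
    \<exists>F. flip F \<in> G1cas \<rho> \<and> (\<forall>c\<in>F. fst c \<notin> A) \<and> F \<inter> E = D"
  using fin
proof (induction E arbitrary: D rule: finite_ranking_induct[where f=fst])
  case empty
  then show ?case using G1cas.G_id[of \<rho>] by (intro exI[of _ "{}"]) (auto simp: flip_empty_id id_def)
next
  case (insert x S)
  show ?case
  proof (cases "x \<in> S")
    case True
    then show ?thesis using insert by (simp add: insert_absorb)
  next
    case xS: False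
    obtain \<xi> i n where x: "x = (\<xi>, i, n)" by (cases x) auto
    have "\<exists>F. flip F \<in> G1cas \<rho> \<and> (\<forall>c\<in>F. fst c \<notin> A) \<and> F \<inter> S = D - {x}"
      using insert.IH[of "D - {x}"] insert.prems by blast
    then obtain F where F: "flip F \<in> G1cas \<rho>" "\<forall>c\<in>F. fst c \<notin> A" "F \<inter> S = D - {x}" by blast
    show ?thesis
    proof (cases "x \<in> F \<longleftrightarrow> x \<in> D")
      case True
      then show ?thesis using F xS by (intro exI[of _ F]) auto
    next
      case False
      define T where "T = ({\<xi>} \<union> Succ \<rho> \<xi>) \<times> {i} \<times> {n}"
      have \<xi>A: "\<xi> \<notin> A" using insert.prems x by auto
      have TA: "\<forall>c\<in>T. fst c \<notin> A"
      proof
        fix c assume "c \<in> T"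
        then consider "fst c = \<xi>" | "fst c \<noteq> om0" "\<rho> (fst c) = \<xi>" by (auto simp: T_def Succ_def)
        then show "fst c \<notin> A" using \<xi>A rc unfolding rho_closed_def by metis
      qed
      have TS: "T \<inter> S = {}"
      proof (rule ccontr)
        assume "T \<inter> S \<noteq> {}"
        then obtain y where y: "y \<in> T" "y \<in> S" by blast
        then have le: "fst y \<le> \<xi>" using insert.hyps(2)[OF y(2)] x by simp
        from y(1) consider "y = x" | "fst y \<noteq> om0" "\<rho> (fst y) = \<xi>"
          by (auto simp: T_def Succ_def x)
        then show False
        proof cases
          case 1 then show False using y xS by simp
        next
          case 2 then have "\<xi> < fst y" using reg unfolding regressive_def by metis
          then show False using le by simp
        qed
      qed
      have xT: "x \<in> T" by (simp add: T_def x)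
      have "tau \<rho> \<xi> i {n} \<circ> flip F \<in> G1cas \<rho>" using F(1) by (rule G1cas.G_step) simp
      then have "flip ((T - F) \<union> (F - T)) \<in> G1cas \<rho>"
        by (simp add: tau_flip flip_comp T_def)
      moreover have "\<forall>c\<in>(T - F) \<union> (F - T). fst c \<notin> A" using TA F(2) by blast
      moreover have "((T - F) \<union> (F - T)) \<inter> insert x S = D"
        using TS xT F(3) False insert.prems(2) xS by blast
      ultimately show ?thesis by blast
    qed
  qed
qed

lemma compat:
  fixes \<rho> :: "'w::wellorder \<Rightarrow> 'w"
  assumes reg: "regressive \<rho>" and rc: "rho_closed \<rho> A" and p: "p \<in> P1"
    and r: "r \<in> P1" "le r (p |` {c. fst c \<in> A})"
  shows "\<exists>F. flip F \<in> Fix \<rho> A \<and> le (p ++ flip F r) p \<and> le (p ++ flip F r) (flip F r)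
     \<and> p ++ flip F r \<in> P1"
proof -
  define E where "E = {c \<in> dom p \<inter> dom r. fst c \<notin> A}"
  define D where "D = {c \<in> E. r c \<noteq> p c}"
  have fE: "finite E" using p unfolding E_def P1_def by auto
  obtain F where F: "flip F \<in> G1cas \<rho>" "\<forall>c\<in>F. fst c \<notin> A" "F \<inter> E = D"
  proof -
    have "\<forall>c\<in>E. fst c \<notin> A" "D \<subseteq> E" unfolding E_def D_def by auto
    then show ?thesis using exists_flip[OF reg rc fE, of D] that by blast
  qed
  have clA: "cl \<rho> A \<subseteq> A" using rc unfolding cl_def by auto
  have fixF: "flip F \<in> Fix \<rho> A"
    unfolding Fix_def using F(1,2) clA by (force simp: flip_def)
  have agree: "flip F r c = p c" if c: "c \<in> dom p" "c \<in> dom r" for c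
  proof (cases "fst c \<in> A")
    case True
    then have "c \<notin> F" using F(2) by auto
    moreover have "r c = p c"
    proof -
      have "c \<in> dom (p |` {c. fst c \<in> A})" using c True by simp
      then have "(p |` {c. fst c \<in> A}) c = r c" using r(2) unfolding le_def map_le_def by blast
      then show ?thesis using True by simp
    qed
    ultimately show ?thesis by (simp add: flip_def)
  next
    case False
    then have cE: "c \<in> E" using c by (auto simp: E_def)
    show ?thesis
    proof (cases "r c = p c")
      case True
      then have "c \<notin> F" using F(3) cE by (auto simp: D_def)
      then show ?thesis using True by (simp add: flip_def)
    next
      case neq: False
      then have "c \<in> F" using F(3) cE by (auto simp: D_def)
      moreover obtain a b where "r c = Some a" "p c = Some b" using c by auto
      ultimately show ?thesis using neq by (auto simp: flip_def)
    qed
  qed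
  have "le (p ++ flip F r) p"
    unfolding le_def map_le_def
  proof
    fix c assume c: "c \<in> dom p"
    show "p c = (p ++ flip F r) c"
    proof (cases "c \<in> dom r")
      case True then show ?thesis using agree[OF c True] by (auto simp: map_add_def split: option.splits)
    next
      case False then have "flip F r c = None" using dom_flip[of F r] by (auto simp del: dom_flip)
      then show ?thesis by (simp add: map_add_def)
    qed
  qed
  moreover have "le (p ++ flip F r) (flip F r)" by (simp add: le_def)
  moreover have "p ++ flip F r \<in> P1" using p r by (simp add: P1_def)
  ultimately show ?thesis using fixF by blast
qed

theorem lemma4p4:
  fixes \<rho> :: "'w::wellorder \<Rightarrow> 'w"
    and x :: "('w, 'i) name"
    and A :: "'w set"
    and m :: nat
    and p :: "'w cond"
  assumes "is_omega1 TYPE('w)"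
    and "regressive \<rho>"
    and "HS \<rho> x"
    and "countable A"
    and "rho_closed \<rho> A"
    and "supported_by \<rho> A x"
    and "p \<in> P1"
    and "decides_mem p (Check m) x"
  shows "(forces_mem p (Check m) x \<longrightarrow> forces_mem (p |` {c. fst c \<in> A}) (Check m) x)
       \<and> (forces_not_mem p (Check m) x \<longrightarrow> forces_not_mem (p |` {c. fst c \<in> A}) (Check m) x)"
proof (intro conjI impI)
  let ?q = "p |` {c. fst c \<in> A}"
  have qP: "?q \<in> P1" using assms(7) by (simp add: P1_def)
  have ne: "\<And>F. flip F \<in> Fix \<rho> A \<Longrightarrow> name_eq (name_map (flip F) x) x"
    using assms(6) unfolding supported_by_def by blast
  {
    assume fp: "forces_mem p (Check m) x"
    show "forces_mem ?q (Check m) x"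
      unfolding forces_mem_def
    proof (intro conjI ballI impI)
      show "?q \<in> P1" by fact
      fix r assume r: "r \<in> P1" "le r ?q"
      obtain F where F: "flip F \<in> Fix \<rho> A" "le (p ++ flip F r) p" "le (p ++ flip F r) (flip F r)"
        "p ++ flip F r \<in> P1"
        using compat[OF assms(2) assms(5) assms(7) r] by blast
      let ?r = "p ++ flip F r"
      have "forces_mem ?r (Check m) x" using forces_mem_mono[OF fp F(4) F(2)] .
      then have "forces_mem (flip F ?r) (Check m) (name_map (flip F) x)"
        using forces_mem_flip by fastforce
      then have fm: "forces_mem (flip F ?r) (Check m) x" using forces_mem_name_eq ne[OF F(1)] by blast
      have lr: "le (flip F ?r) r" using F(3) le_flip[of F ?r "flip F r"] by simp
      from fm obtain q' \<sigma> s where "q' \<in> P1" "le q' (flip F ?r)" "(\<sigma>, s) \<in> members x" "le q' s"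
        "forces_eq q' (Check m) \<sigma>"
        unfolding forces_mem_def using le_def by fastforce
      then show "\<exists>q\<in>P1. le q r \<and> (\<exists>\<sigma> s. (\<sigma>, s) \<in> members x \<and> le q s \<and> forces_eq q (Check m) \<sigma>)"
        using lr le_trans' by blast
    qed
  }
  {
    assume fn: "forces_not_mem p (Check m) x"
    show "forces_not_mem ?q (Check m) x"
      unfolding forces_not_mem_def
    proof (intro conjI notI)
      show "?q \<in> P1" by fact
      assume "\<exists>r\<in>P1. le r ?q \<and> forces_mem r (Check m) x"
      then obtain r where r: "r \<in> P1" "le r ?q" "forces_mem r (Check m) x" by blast
      obtain F where F: "flip F \<in> Fix \<rho> A" "le (p ++ flip F r) p" "le (p ++ flip F r) (flip F r)"
        "p ++ flip F r \<in> P1"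
        using compat[OF assms(2) assms(5) assms(7) r(1,2)] by blast
      have "forces_mem (flip F r) (Check m) (name_map (flip F) x)"
        using forces_mem_flip[OF r(3)] by fastforce
      then have "forces_mem (flip F r) (Check m) x" using forces_mem_name_eq ne[OF F(1)] by blast
      then have "forces_mem (p ++ flip F r) (Check m) x" using forces_mem_mono F(3,4) by blast
      then show False using fn F(2,4) unfolding forces_not_mem_def by blast
    qed
  }
qed

end
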